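(* Let $m\ge 4$ be an integer. For every $f:\{0,1\}^N\to\{0,1\}$, $$C^{*,\oplus}(f\circ\mathrm{IND}_m^N)\ge \tfrac12\, C^{dt}(f)\log_2 m.$$ Furthermore, for every relation $R\subseteq\{0,1\}^N\times W$, $$C^{*,\oplus}(R\circ\mathrm{IND}_m^N)\ge\tfrac12\,C^{dt}(R)\log_2 m.$$
   Context: $\mathrm{IND}_m:[m]\times\{0,1\}^m\to\{0,1\}$, $\mathrm{IND}_m(x,y)=y_x$; $\mathrm{IND}_m^N(x,y)=(\mathrm{IND}_m(x_i,y_i))_{i\in[N]}$ for $x\in[m]^N$ (Alice's input) and $y\in(\{0,1\}^m)^N$ (Bob's input, viewed as a vector in $\mathbb{F}_2^{[N]\times[m]}$). The lifted function is $(f\circ\mathrm{IND}_m^N)(x,y)=f(\mathrm{IND}_m^N(x,y))$; the lifted relation $R\circ\mathrm{IND}_m^N$ relates $(x,y)$ to $w$ iff $(\mathrm{IND}_m^N(x,y),w)\in R$. A $( *,\oplus)$-protocol (semi-structured protocol) is a deterministic two-party communication protocol in which Alice may send arbitrary functions of her input (and the transcript so far) but each bit Bob sends is a parity $\bigoplus_{(i,j)\in S}y_{i,j}$ of his input bits, with $S$ depending on the transcript so far. $C^{*,\oplus}(F)$ is the minimum worst-case number of bits communicated by a $( *,\oplus)$-protocol computing $F$; for a relation, the protocol on input $(x,y)$ must output some $w$ related to $(x,y)$ (or $\bot$ if none exists). $C^{dt}(f)$ (resp. $C^{dt}(R)$) is the minimum height of a decision tree querying bits of $z\in\{0,1\}^N$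 that computes $f$ (resp. outputs some $w$ with $(z,w)\in R$, or $\bot$ if no such $w$ exists). *)

theory Defs
  imports Complex_Main
begin

datatype 'o dtree = DLeaf 'o | DQuery nat "'o dtree" "'o dtree"

fun dt_eval :: "'o dtree \<Rightarrow> bool list \<Rightarrow> 'o" where
  "dt_eval (DLeaf o') z = o'"
| "dt_eval (DQuery i t0 t1) z = (if z ! i then dt_eval t1 z else dt_eval t0 z)"

fun dt_height :: "'o dtree \<Rightarrow> nat" where
  "dt_height (DLeaf _) = 0"
| "dt_height (DQuery i t0 t1) = Suc (max (dt_height t0) (dt_height t1))"

fun dt_valid :: "nat \<Rightarrow> 'o dtree \<Rightarrow> bool" where
  "dt_valid N (DLeaf _) = True"
| "dt_valid N (DQuery i t0 t1) = (i < N \<and> dt_valid N t0 \<and> dt_valid N t1)"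

definition bool_inputs :: "nat \<Rightarrow> bool list set" where
  "bool_inputs N = {z. length z = N}"

definition dt_computes_fun :: "nat \<Rightarrow> (bool list \<Rightarrow> bool) \<Rightarrow> bool dtree \<Rightarrow> bool" where
  "dt_computes_fun N f t \<longleftrightarrow> dt_valid N t \<and> (\<forall>z\<in>bool_inputs N. dt_eval t z = f z)"

text \<open>Relation solving: output Some w with (z,w) in R, or None (= bottom) if no such w exists.\<close>
definition solves_rel :: "('i \<times> 'w) set \<Rightarrow> 'i \<Rightarrow> 'w option \<Rightarrow> bool" where
  "solves_rel R z r \<longleftrightarrow>
     (if \<exists>w. (z, w) \<in> R then (\<exists>w. r = Some w \<and> (z, w) \<in> R) else r = None)"

definition dt_computes_rel :: "nat \<Rightarrow> (bool list \<times> 'w) set \<Rightarrow> 'w option dtree \<Rightarrow> bool" where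
  "dt_computes_rel N R t \<longleftrightarrow> dt_valid N t \<and> (\<forall>z\<in>bool_inputs N. solves_rel R z (dt_eval t z))"

definition C_dt_fun :: "nat \<Rightarrow> (bool list \<Rightarrow> bool) \<Rightarrow> nat" where
  "C_dt_fun N f = (LEAST d. \<exists>t. dt_computes_fun N f t \<and> dt_height t = d)"

definition C_dt_rel :: "nat \<Rightarrow> (bool list \<times> 'w) set \<Rightarrow> nat" where
  "C_dt_rel N R = (LEAST d. \<exists>t. dt_computes_rel N R t \<and> dt_height t = d)"

text \<open>Alice's input x \<in> [m]^N: nat list of length N, entries in {0..<m} (0-indexed [m]).
  Bob's input y \<in> ({0,1}^m)^N: list of N bool lists of length m; y!i!j is y_{i,j}.\<close>

definition alice_inputs :: "nat \<Rightarrow> nat \<Rightarrow> nat list set" where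
  "alice_inputs m N = {x. length x = N \<and> (\<forall>i<N. x ! i < m)}"

definition bob_inputs :: "nat \<Rightarrow> nat \<Rightarrow> bool list list set" where
  "bob_inputs m N = {y. length y = N \<and> (\<forall>i<N. length (y ! i) = m)}"

definition IND :: "nat \<Rightarrow> bool list \<Rightarrow> bool" where
  "IND x y = y ! x"

definition IND_N :: "nat \<Rightarrow> nat list \<Rightarrow> bool list list \<Rightarrow> bool list" where
  "IND_N N x y = map (\<lambda>i. IND (x ! i) (y ! i)) [0..<N]"

text \<open>Each node's message may depend on the transcript so far via the node's
  position in the tree. Alice's bit is an arbitrary function of her input; Bob's bit is the
  parity of his input bits indexed by a set S \<subseteq> [N] \<times> [m].\<close>

datatype ('a, 'o) prot =
    POut 'o
  | PAlice "'a \<Rightarrow> bool" "('a, 'o) prot" "('a, 'o) prot"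
  | PBob "(nat \<times> nat) set" "('a, 'o) prot" "('a, 'o) prot"

definition parity :: "(nat \<times> nat) set \<Rightarrow> bool list list \<Rightarrow> bool" where
  "parity S y = odd (card {(i, j) \<in> S. y ! i ! j})"

fun prot_eval :: "('a, 'o) prot \<Rightarrow> 'a \<Rightarrow> bool list list \<Rightarrow> 'o" where
  "prot_eval (POut o') x y = o'"
| "prot_eval (PAlice g p0 p1) x y = (if g x then prot_eval p1 x y else prot_eval p0 x y)"
| "prot_eval (PBob S p0 p1) x y = (if parity S y then prot_eval p1 x y else prot_eval p0 x y)"

fun prot_cost :: "('a, 'o) prot \<Rightarrow> nat" where
  "prot_cost (POut _) = 0"
| "prot_cost (PAlice g p0 p1) = Suc (max (prot_cost p0) (prot_cost p1))"
| "prot_cost (PBob S p0 p1) = Suc (max (prot_cost p0) (prot_cost p1))"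

fun prot_valid :: "nat \<Rightarrow> nat \<Rightarrow> ('a, 'o) prot \<Rightarrow> bool" where
  "prot_valid m N (POut _) = True"
| "prot_valid m N (PAlice g p0 p1) = (prot_valid m N p0 \<and> prot_valid m N p1)"
| "prot_valid m N (PBob S p0 p1) =
     (S \<subseteq> {..<N} \<times> {..<m} \<and> prot_valid m N p0 \<and> prot_valid m N p1)"

definition C_xor_lift_fun :: "nat \<Rightarrow> nat \<Rightarrow> (bool list \<Rightarrow> bool) \<Rightarrow> nat" where
  "C_xor_lift_fun m N f = (LEAST c. \<exists>p :: (nat list, bool) prot.
     prot_valid m N p \<and> prot_cost p = c \<and>
     (\<forall>x\<in>alice_inputs m N. \<forall>y\<in>bob_inputs m N. prot_eval p x y = f (IND_N N x y)))"

definition C_xor_lift_rel :: "nat \<Rightarrow> nat \<Rightarrow> (bool list \<times> 'w) set \<Rightarrow> nat" where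
  "C_xor_lift_rel m N R = (LEAST c. \<exists>p :: (nat list, 'w option) prot.
     prot_valid m N p \<and> prot_cost p = c \<and>
     (\<forall>x\<in>alice_inputs m N. \<forall>y\<in>bob_inputs m N. solves_rel R (IND_N N x y) (prot_eval p x y)))"

end

theory Submission
  imports Defs "HOL-Library.FuncSet"
begin

type_synonym row = "(nat \<times> nat) set \<times> bool \<times> (nat \<times> nat)"

definition pf :: "(nat \<times> nat) set \<Rightarrow> (nat \<times> nat \<Rightarrow> bool) \<Rightarrow> bool" where
  "pf S Y = odd (card {v\<in>S. Y v})"

fun sat :: "row list \<Rightarrow> (nat \<times> nat \<Rightarrow> bool) \<Rightarrow> bool" where
  "sat [] Y = True"
| "sat ((T,b,p)#cs) Y = (pf T Y = b \<and> sat cs Y)"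

fun pivs :: "row list \<Rightarrow> (nat \<times> nat) set" where
  "pivs [] = {}"
| "pivs ((T,b,p)#cs) = insert p (pivs cs)"

fun ech :: "row list \<Rightarrow> bool" where
  "ech [] = True"
| "ech ((T,b,p)#cs) = (p \<in> T \<and> T \<inter> pivs cs = {} \<and> ech cs)"

fun red :: "(nat \<times> nat) set \<Rightarrow> row list \<Rightarrow> (nat \<times> nat) set \<times> bool" where
  "red S [] = (S, False)"
| "red S ((T,b,p)#cs) = (case red S cs of (S1,s1) \<Rightarrow>
     if p \<in> S1 then ((S1 - T) \<union> (T - S1), s1 \<noteq> b) else (S1, s1))"

definition toF :: "bool list list \<Rightarrow> nat \<times> nat \<Rightarrow> bool" where
  "toF y = (\<lambda>(i,j). y!i!j)"

lemma parity_pf: "parity S y = pf S (toF y)"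
proof -
  have "{(i, j). (i, j) \<in> S \<and> y!i!j} = {v\<in>S. toF y v}" unfolding toF_def by auto
  then show ?thesis unfolding parity_def pf_def by simp
qed

lemma pf_cong: "(\<And>v. v\<in>S \<Longrightarrow> Y v = Y' v) \<Longrightarrow> pf S Y = pf S Y'"
proof -
  assume "\<And>v. v\<in>S \<Longrightarrow> Y v = Y' v"
  then have "{v\<in>S. Y v} = {v\<in>S. Y' v}" by auto
  then show ?thesis unfolding pf_def by simp
qed

lemma pf_remove: assumes "finite S" "p\<in>S" shows "pf S Y = (pf (S - {p}) Y \<noteq> Y p)"
proof (cases "Y p")
  case True
  then have "{v\<in>S. Y v} = insert p {v\<in>S-{p}. Y v}" using assms by auto
  moreover have "card (insert p {v\<in>S-{p}. Y v}) = Suc (card {v\<in>S-{p}. Y v})"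
    using assms by simp
  ultimately show ?thesis using True unfolding pf_def by simp
next
  case False
  then have "{v\<in>S. Y v} = {v\<in>S-{p}. Y v}" using assms by auto
  then show ?thesis using False unfolding pf_def by simp
qed

lemma pf_symdiff: assumes "finite A" "finite B"
  shows "pf ((A - B) \<union> (B - A)) Y = (pf A Y \<noteq> pf B Y)"
proof -
  define A' where "A' = {v\<in>A. Y v}"
  define B' where "B' = {v\<in>B. Y v}"
  have fA: "finite A'" "finite B'" using assms unfolding A'_def B'_def by auto
  have e: "{v\<in>(A - B) \<union> (B - A). Y v} = (A' - B') \<union> (B' - A')" unfolding A'_def B'_def by auto
  have c1: "card ((A' - B') \<union> (B' - A')) = card (A' - B') + card (B' - A')"
    using fA by (intro card_Un_disjoint) auto
  have c2: "card A' = card (A' - B') + card (A' \<inter> B')"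
    using card_Int_Diff[OF fA(1), of B'] by simp
  have c3: "card B' = card (B' - A') + card (A' \<inter> B')"
    using card_Int_Diff[OF fA(2), of A'] by (simp add: Int_commute)
  show ?thesis unfolding pf_def e[unfolded A'_def B'_def] A'_def[symmetric] B'_def[symmetric]
    using c1 c2 c3 by presburger
qed

lemma sat_cong: "(\<And>v. v \<in> \<Union>(fst ` set cs) \<Longrightarrow> Y v = Y' v) \<Longrightarrow> sat cs Y = sat cs Y'"
proof (induction cs)
  case Nil then show ?case by simp
next
  case (Cons e cs)
  obtain T b p where e: "e = (T,b,p)" by (cases e)
  have "pf T Y = pf T Y'" using Cons.prems e by (intro pf_cong) auto
  moreover have "sat cs Y = sat cs Y'" using Cons by auto
  ultimately show ?case using e by simp
qed

lemma ech_solve: "ech cs \<Longrightarrow> (\<forall>e\<in>set cs. finite (fst e)) \<Longrightarrow>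
   \<exists>Y. sat cs Y \<and> (\<forall>v. v \<notin> pivs cs \<longrightarrow> Y v = Y0 v)"
proof (induction cs arbitrary: Y0)
  case Nil then show ?case by auto
next
  case (Cons e cs)
  obtain T b p where e: "e = (T,b,p)" by (cases e)
  have pT: "p \<in> T" and dis: "T \<inter> pivs cs = {}" and ec: "ech cs" using Cons.prems e by auto
  have fT: "finite T" using Cons.prems e by auto
  define Y1 where "Y1 = Y0(p := (b \<noteq> pf (T - {p}) Y0))"
  have "pf T Y1 = b"
  proof -
    have "pf (T - {p}) Y1 = pf (T - {p}) Y0" unfolding Y1_def by (intro pf_cong) auto
    then show ?thesis using pf_remove[OF fT pT, of Y1] unfolding Y1_def by auto
  qed
  obtain Y where Y: "sat cs Y" "\<forall>v. v \<notin> pivs cs \<longrightarrow> Y v = Y1 v"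
    using Cons.IH[OF ec, of Y1] Cons.prems by auto
  have "pf T Y = pf T Y1" using Y(2) dis by (intro pf_cong) auto
  then have "sat (e#cs) Y" using Y \<open>pf T Y1 = b\<close> e by simp
  moreover have "\<forall>v. v \<notin> pivs (e#cs) \<longrightarrow> Y v = Y0 v" using Y(2) e unfolding Y1_def by auto
  ultimately show ?case by blast
qed

lemma red_fin: "finite S \<Longrightarrow> (\<forall>e\<in>set cs. finite (fst e)) \<Longrightarrow> finite (fst (red S cs))"
  by (induction S cs rule: red.induct) (auto split: prod.splits)

lemma red_sub: "S \<subseteq> B \<Longrightarrow> (\<forall>e\<in>set cs. fst e \<subseteq> B) \<Longrightarrow> fst (red S cs) \<subseteq> B"
  by (induction S cs rule: red.induct) (auto split: prod.splits)

lemma red_disj: "ech cs \<Longrightarrow> fst (red S cs) \<inter> pivs cs = {}"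
  by (induction S cs rule: red.induct) (auto split: prod.splits)

lemma red_par: "finite S \<Longrightarrow> (\<forall>e\<in>set cs. finite (fst e)) \<Longrightarrow> sat cs Y \<Longrightarrow>
   pf S Y = (pf (fst (red S cs)) Y \<noteq> snd (red S cs))"
proof (induction S cs rule: red.induct)
  case (1 S) then show ?case by simp
next
  case (2 S T b p cs)
  obtain S1 s1 where r: "red S cs = (S1, s1)" by (cases "red S cs")
  have f1: "finite S1" using red_fin[of S cs] 2 r by auto
  have fT: "finite T" using 2 by auto
  have ih: "pf S Y = (pf S1 Y \<noteq> s1)" using 2 r by auto
  have pT: "pf T Y = b" using 2 by simp
  show ?case using ih pT pf_symdiff[OF f1 fT, of Y] r by auto
qed


definition Yset :: "nat \<Rightarrow> nat \<Rightarrow> nat set \<Rightarrow> (nat \<Rightarrow> nat) \<Rightarrow> (nat \<Rightarrow> bool) \<Rightarrow> row list \<Rightarrow> bool list list set" where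
  "Yset m N Q a \<rho> cs = {y \<in> bob_inputs m N. sat cs (toF y) \<and> (\<forall>i\<in>Q. y!i!(a i) = \<rho> i)}"

definition Inv :: "nat \<Rightarrow> nat \<Rightarrow> nat list set \<Rightarrow> nat set \<Rightarrow> (nat \<Rightarrow> nat) \<Rightarrow> row list \<Rightarrow> bool" where
  "Inv m N X Q a cs \<longleftrightarrow> X \<subseteq> alice_inputs m N \<and> X \<noteq> {} \<and> Q \<subseteq> {..<N} \<and>
     (\<forall>x\<in>X. \<forall>i\<in>Q. x!i = a i) \<and> ech cs \<and> (\<forall>e\<in>set cs. fst e \<subseteq> {..<N} \<times> {..<m}) \<and>
     (\<forall>x\<in>X. \<forall>i c. (i,c) \<in> pivs cs \<longrightarrow> x!i \<noteq> c)"

definition Good :: "(bool list \<Rightarrow> 'o \<Rightarrow> bool) \<Rightarrow> nat \<Rightarrow> nat \<Rightarrow> (nat list, 'o) prot \<Rightarrow> nat list set \<Rightarrow> nat set \<Rightarrow> (nat \<Rightarrow> nat) \<Rightarrow> (nat \<Rightarrow> bool) \<Rightarrow> row list \<Rightarrow> bool" where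
  "Good ok m N p X Q a \<rho> cs \<longleftrightarrow> (\<forall>x\<in>X. \<forall>y\<in>Yset m N Q a \<rho> cs. ok (IND_N N x y) (prot_eval p x y))"

definition Res :: "(bool list \<Rightarrow> 'o \<Rightarrow> bool) \<Rightarrow> nat \<Rightarrow> nat set \<Rightarrow> (nat \<Rightarrow> bool) \<Rightarrow> 'o dtree \<Rightarrow> bool" where
  "Res ok N Q \<rho> t \<longleftrightarrow> dt_valid N t \<and> (\<forall>z. length z = N \<longrightarrow> (\<forall>i\<in>Q. z!i = \<rho> i) \<longrightarrow> ok z (dt_eval t z))"

definition dense :: "nat \<Rightarrow> nat \<Rightarrow> nat list set \<Rightarrow> nat set \<Rightarrow> bool" where
  "dense m N X Q \<longleftrightarrow> (\<forall>i<N. i \<notin> Q \<longrightarrow> (\<forall>c. card {x\<in>X. x!i = c} ^ 2 * m < card X ^ 2))"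

lemma alice_eq: "alice_inputs m N = {xs. set xs \<subseteq> {..<m} \<and> length xs = N}"
  unfolding alice_inputs_def apply (auto simp: in_set_conv_nth)
  apply (metis lessThan_iff nth_mem subsetD) done

lemma alice_fin: "finite (alice_inputs m N)"
  unfolding alice_eq by (rule finite_lists_length_eq) simp

lemma alice_card: "card (alice_inputs m N) = m ^ N"
  unfolding alice_eq by (simp add: card_lists_length_eq)

lemma Inv_fin: "Inv m N X Q a cs \<Longrightarrow> finite X"
  unfolding Inv_def using alice_fin finite_subset by blast

lemma Inv_rowfin: "Inv m N X Q a cs \<Longrightarrow> \<forall>e\<in>set cs. finite (fst e)"
  unfolding Inv_def by (meson finite_SigmaI finite_lessThan finite_subset)

lemma Inv_sub: "Inv m N X Q a cs \<Longrightarrow> X' \<subseteq> X \<Longrightarrow> X' \<noteq> {} \<Longrightarrow> Inv m N X' Q a cs"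
  unfolding Inv_def by blast

lemma solvable:
  assumes inv: "Inv m N X Q a cs" and lz: "length z = N" and cz: "\<forall>i\<in>Q. z!i = \<rho> i"
  shows "\<exists>x\<in>X. \<exists>y\<in>Yset m N Q a \<rho> cs. IND_N N x y = z"
proof -
  obtain x where x: "x \<in> X" using inv unfolding Inv_def by blast
  have xa: "x \<in> alice_inputs m N" using inv x unfolding Inv_def by blast
  then have xlen: "length x = N" and xm: "\<And>i. i < N \<Longrightarrow> x!i < m" unfolding alice_inputs_def by auto
  have nopiv: "\<And>i. (i, x!i) \<notin> pivs cs" using inv x unfolding Inv_def by blast
  define Y0 where "Y0 = (\<lambda>(i::nat,j::nat). j = x!i \<and> z!i)"
  obtain Yf where Yf: "sat cs Yf" "\<forall>v. v \<notin> pivs cs \<longrightarrow> Yf v = Y0 v"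
    using ech_solve[of cs Y0] inv Inv_rowfin[OF inv] unfolding Inv_def by blast
  define y where "y = map (\<lambda>i. map (\<lambda>j. Yf (i,j)) [0..<m]) [0..<N]"
  have yij: "\<And>i j. i<N \<Longrightarrow> j<m \<Longrightarrow> y!i!j = Yf (i,j)" by (simp add: y_def)
  have yx: "\<And>i. i<N \<Longrightarrow> y!i!(x!i) = z!i"
    using yij xm Yf(2) nopiv unfolding Y0_def by auto
  have yb: "y \<in> bob_inputs m N" by (simp add: bob_inputs_def y_def)
  have "sat cs (toF y) = sat cs Yf"
  proof (rule sat_cong)
    fix v assume "v \<in> \<Union>(fst ` set cs)"
    then have "v \<in> {..<N} \<times> {..<m}" using inv unfolding Inv_def by blast
    then show "toF y v = Yf v" using yij unfolding toF_def by auto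
  qed
  then have sy: "sat cs (toF y)" using Yf(1) by simp
  have qy: "\<forall>i\<in>Q. y!i!(a i) = \<rho> i"
  proof
    fix i assume iQ: "i \<in> Q"
    then have "i < N" "a i = x!i" using inv x unfolding Inv_def by auto
    then show "y!i!(a i) = \<rho> i" using yx cz iQ by auto
  qed
  have "IND_N N x y = z"
    by (rule nth_equalityI) (auto simp: IND_N_def IND_def lz yx)
  then show ?thesis using x yb sy qy unfolding Yset_def by blast
qed

lemma card_box:
  assumes "X \<subseteq> alice_inputs m N" "\<forall>x\<in>X. \<forall>i\<in>Q. x!i = a i"
  shows "card X \<le> m ^ card ({..<N} - Q)"
proof -
  let ?F = "{..<N} - Q"
  let ?f = "\<lambda>x. restrict (\<lambda>i. x!i) ?F"
  have "inj_on ?f X"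
  proof
    fix x x' assume xx: "x \<in> X" "x' \<in> X" "?f x = ?f x'"
    have l: "length x = N" "length x' = N" using xx assms(1) unfolding alice_inputs_def by auto
    show "x = x'"
    proof (rule nth_equalityI)
      show "length x = length x'" using l by simp
      fix k assume "k < length x"
      then have k: "k < N" using l by simp
      show "x!k = x'!k"
      proof (cases "k \<in> Q")
        case True then show ?thesis using xx assms(2) by auto
      next
        case False
        then have "?f x k = ?f x' k" using xx by simp
        then show ?thesis using False k by simp
      qed
    qed
  qed
  moreover have "?f ` X \<subseteq> PiE ?F (\<lambda>_. {..<m})"
  proof
    fix u assume "u \<in> ?f ` X"
    then obtain x where x: "x \<in> X" "u = ?f x" by blast
    then have "\<forall>i<N. x!i < m" using assms(1) unfolding alice_inputs_def by auto
    then show "u \<in> PiE ?F (\<lambda>_. {..<m})" using x by (simp add: restrict_PiE_iff)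
  qed
  moreover have "finite (PiE ?F (\<lambda>_. {..<m}))" by (simp add: finite_PiE)
  ultimately have "card X \<le> card (PiE ?F (\<lambda>_. {..<m}))" by (rule card_inj_on_le)
  also have "\<dots> = m ^ card ?F" by (simp add: card_PiE)
  finally show ?thesis .
qed


lemma restore:
  fixes ok :: "bool list \<Rightarrow> 'o \<Rightarrow> bool" and p :: "(nat list, 'o) prot"
  assumes m4: "4 \<le> m"
  and dc: "\<And>X Q a \<rho> cs. Inv m N X Q a cs \<Longrightarrow> dense m N X Q \<Longrightarrow> Good ok m N p X Q a \<rho> cs \<Longrightarrow>
     \<exists>t. Res ok N Q \<rho> t \<and> m ^ dt_height t * card X ^ 2 \<le> 4 ^ prot_cost p * m ^ (2 * card ({..<N} - Q))"
  shows "Inv m N X Q a cs \<Longrightarrow> Good ok m N p X Q a \<rho> cs \<Longrightarrow>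
     \<exists>t. Res ok N Q \<rho> t \<and> m ^ dt_height t * card X ^ 2 \<le> 4 ^ prot_cost p * m ^ (2 * card ({..<N} - Q))"
proof (induction "card ({..<N} - Q)" arbitrary: X Q a \<rho> cs rule: less_induct)
  case less
  show ?case
  proof (cases "dense m N X Q")
    case True then show ?thesis using dc less.prems by blast
  next
    case False
    then obtain i c where i: "i < N" "i \<notin> Q" and hv: "card X ^ 2 \<le> card {x\<in>X. x!i = c} ^ 2 * m"
      unfolding dense_def by (auto simp: not_less)
    define X' where "X' = {x\<in>X. x!i = c}"
    define Q' where "Q' = insert i Q"
    define a' where "a' = a(i := c)"
    have finX: "finite X" using Inv_fin[OF less.prems(1)] .
    have "X \<noteq> {}" using less.prems(1) unfolding Inv_def by blast
    then have cX: "card X > 0" using finX by (simp add: card_gt_0_iff)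
    have X'ne: "X' \<noteq> {}"
    proof
      assume "X' = {}"
      then have "card {x\<in>X. x!i = c} = 0" unfolding X'_def by (metis card.empty)
      then show False using hv cX by simp
    qed
    have inv': "Inv m N X' Q' a' cs"
      using less.prems(1) X'ne i unfolding Inv_def X'_def Q'_def a'_def by auto
    have fin: "finite ({..<N} - Q)" by simp
    have eqQ: "{..<N} - Q' = ({..<N} - Q) - {i}" unfolding Q'_def by auto
    have iin: "i \<in> {..<N} - Q" using i by simp
    have fr: "card ({..<N} - Q) = Suc (card ({..<N} - Q'))"
    proof -
      have c0: "card ({..<N} - Q) > 0" using fin iin card_gt_0_iff by blast
      show ?thesis unfolding eqQ card_Diff_singleton[OF iin] using c0 by simp
    qed
    then have lt: "card ({..<N} - Q') < card ({..<N} - Q)" by simp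
    have good': "Good ok m N p X' Q' a' (\<rho>(i:=bb)) cs" for bb
    proof -
      have "Yset m N Q' a' (\<rho>(i:=bb)) cs \<subseteq> Yset m N Q a \<rho> cs"
        using i unfolding Yset_def Q'_def a'_def by auto
      moreover have "X' \<subseteq> X" unfolding X'_def by auto
      ultimately show ?thesis using less.prems(2) unfolding Good_def by blast
    qed
    obtain t0 where t0: "Res ok N Q' (\<rho>(i:=False)) t0"
      "m ^ dt_height t0 * card X' ^ 2 \<le> 4 ^ prot_cost p * m ^ (2 * card ({..<N} - Q'))"
      using less.hyps[OF lt inv' good'] by blast
    obtain t1 where t1: "Res ok N Q' (\<rho>(i:=True)) t1"
      "m ^ dt_height t1 * card X' ^ 2 \<le> 4 ^ prot_cost p * m ^ (2 * card ({..<N} - Q'))"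
      using less.hyps[OF lt inv' good'] by blast
    define t where "t = DQuery i t0 t1"
    have "Res ok N Q \<rho> t"
      unfolding Res_def
    proof (intro conjI allI impI)
      show "dt_valid N t" using t0(1) t1(1) i unfolding t_def Res_def by simp
      fix z :: "bool list" assume lz: "length z = N" and cz: "\<forall>j\<in>Q. z!j = \<rho> j"
      show "ok z (dt_eval t z)"
      proof (cases "z!i")
        case True
        then have "\<forall>j\<in>Q'. z!j = (\<rho>(i:=True)) j" using cz unfolding Q'_def by auto
        then show ?thesis using t1(1) lz True unfolding Res_def t_def by simp
      next
        case False
        then have "\<forall>j\<in>Q'. z!j = (\<rho>(i:=False)) j" using cz unfolding Q'_def by auto
        then show ?thesis using t0(1) lz False unfolding Res_def t_def by simp
      qed
    qed
    moreover have "m ^ dt_height t * card X ^ 2 \<le> 4 ^ prot_cost p * m ^ (2 * card ({..<N} - Q))"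
    proof -
      define h where "h = max (dt_height t0) (dt_height t1)"
      define F' where "F' = card ({..<N} - Q')"
      define C :: nat where "C = 4 ^ prot_cost p"
      have hb: "m ^ h * card X' ^ 2 \<le> C * m ^ (2 * F')"
        using t0(2) t1(2) unfolding h_def F'_def C_def by (cases "dt_height t0 \<le> dt_height t1") (auto simp: max_def)
      have "m ^ dt_height t * card X ^ 2 = m ^ Suc h * card X ^ 2" unfolding t_def h_def by simp
      also have "\<dots> \<le> m ^ Suc h * (card X' ^ 2 * m)" using hv unfolding X'_def by (intro mult_left_mono) auto
      also have "\<dots> = m * m * (m ^ h * card X' ^ 2)" by (simp add: algebra_simps)
      also have "\<dots> \<le> m * m * (C * m ^ (2 * F'))" using hb by (intro mult_left_mono) auto
      also have "\<dots> = C * m ^ (2 * Suc F')" by (simp add: algebra_simps power_add)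
      finally show ?thesis using fr unfolding F'_def C_def by simp
    qed
    ultimately show ?thesis by blast
  qed
qed


lemma main:
  fixes ok :: "bool list \<Rightarrow> 'o \<Rightarrow> bool" and p :: "(nat list, 'o) prot"
  assumes m4: "4 \<le> m"
  shows "prot_valid m N p \<Longrightarrow> Inv m N X Q a cs \<Longrightarrow> Good ok m N p X Q a \<rho> cs \<Longrightarrow>
     \<exists>t. Res ok N Q \<rho> t \<and> m ^ dt_height t * card X ^ 2 \<le> 4 ^ prot_cost p * m ^ (2 * card ({..<N} - Q))"
proof (induction p arbitrary: X Q a \<rho> cs)
  case (POut o')
  define t :: "'o dtree" where "t = DLeaf o'"
  have "Res ok N Q \<rho> t"
    unfolding Res_def
  proof (intro conjI allI impI)
    show "dt_valid N t" unfolding t_def by simp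
    fix z :: "bool list" assume lz: "length z = N" and cz: "\<forall>j\<in>Q. z!j = \<rho> j"
    obtain x y where "x \<in> X" "y \<in> Yset m N Q a \<rho> cs" "IND_N N x y = z"
      using solvable[OF POut.prems(2) lz cz] by blast
    then show "ok z (dt_eval t z)" using POut.prems(3) unfolding Good_def t_def by force
  qed
  moreover have "card X \<le> m ^ card ({..<N} - Q)"
    using POut.prems(2) unfolding Inv_def by (intro card_box) auto
  then have "card X ^ 2 \<le> (m ^ card ({..<N} - Q)) ^ 2" by (rule power_mono) simp
  then have "m ^ dt_height t * card X ^ 2 \<le> 4 ^ prot_cost (POut o' :: (nat list, 'o) prot) * m ^ (2 * card ({..<N} - Q))"
    unfolding t_def by (simp add: power_mult[symmetric] mult.commute)
  ultimately show ?case by blast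
next
  case (PAlice g p0 p1)
  have v0: "prot_valid m N p0" and v1: "prot_valid m N p1" using PAlice.prems(1) by auto
  have dc: "\<exists>t. Res ok N Q \<rho> t \<and> m ^ dt_height t * card X ^ 2 \<le> 4 ^ prot_cost (PAlice g p0 p1) * m ^ (2 * card ({..<N} - Q))"
    if inv: "Inv m N X Q a cs" and gd: "Good ok m N (PAlice g p0 p1) X Q a \<rho> cs" for X Q a \<rho> cs
  proof -
    define F where "F = card ({..<N} - Q)"
    have finX: "finite X" using Inv_fin[OF inv] .
    have "X \<noteq> {}" using inv unfolding Inv_def by blast
    then have cX: "card X > 0" using finX by (simp add: card_gt_0_iff)
    have split: "card X = card {x\<in>X. g x} + card {x\<in>X. \<not> g x}"
    proof -
      have "X = {x\<in>X. g x} \<union> {x\<in>X. \<not> g x}" by auto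
      then have "card X = card ({x\<in>X. g x} \<union> {x\<in>X. \<not> g x})" by simp
      also have "\<dots> = card {x\<in>X. g x} + card {x\<in>X. \<not> g x}" using finX by (intro card_Un_disjoint) auto
      finally show ?thesis .
    qed
    have key: "m ^ h * card X ^ 2 \<le> 4 ^ prot_cost (PAlice g p0 p1) * m ^ (2 * F)"
      if "card X \<le> 2 * card X'" "m ^ h * card X' ^ 2 \<le> 4 ^ c' * m ^ (2 * F)" "c' \<le> max (prot_cost p0) (prot_cost p1)"
      for h X' c'
    proof -
      have "m ^ h * card X ^ 2 \<le> m ^ h * (2 * card X') ^ 2" using that(1) by (intro mult_left_mono power_mono) auto
      also have "\<dots> = 4 * (m ^ h * card X' ^ 2)" by (simp add: power_mult_distrib)
      also have "\<dots> \<le> 4 * (4 ^ c' * m ^ (2 * F))" using that(2) by simp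
      also have "\<dots> \<le> 4 * (4 ^ max (prot_cost p0) (prot_cost p1) * m ^ (2 * F))"
        using that(3) by (intro mult_left_mono mult_right_mono power_increasing) auto
      also have "\<dots> = 4 ^ prot_cost (PAlice g p0 p1) * m ^ (2 * F)" by simp
      finally show ?thesis .
    qed
    consider (one) "card X \<le> 2 * card {x\<in>X. g x}" | (zero) "card X \<le> 2 * card {x\<in>X. \<not> g x}"
      using split by linarith
    then show ?thesis
    proof cases
      case one
      define X1 where "X1 = {x\<in>X. g x}"
      have "card X1 > 0" using one cX unfolding X1_def by linarith
      then have "X1 \<noteq> {}" by auto
      then have inv1: "Inv m N X1 Q a cs" by (rule Inv_sub[OF inv, rotated]) (simp add: X1_def)
      have gd1: "Good ok m N p1 X1 Q a \<rho> cs" using gd unfolding Good_def X1_def by auto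
      obtain t where t: "Res ok N Q \<rho> t" "m ^ dt_height t * card X1 ^ 2 \<le> 4 ^ prot_cost p1 * m ^ (2 * F)"
        using PAlice.IH(2)[OF v1 inv1 gd1, folded F_def] by blast
      show ?thesis using t key[OF _ t(2)] one unfolding X1_def F_def by auto
    next
      case zero
      define X0 where "X0 = {x\<in>X. \<not> g x}"
      have "card X0 > 0" using zero cX unfolding X0_def by linarith
      then have "X0 \<noteq> {}" by auto
      then have inv0: "Inv m N X0 Q a cs" by (rule Inv_sub[OF inv, rotated]) (simp add: X0_def)
      have gd0: "Good ok m N p0 X0 Q a \<rho> cs" using gd unfolding Good_def X0_def by auto
      obtain t where t: "Res ok N Q \<rho> t" "m ^ dt_height t * card X0 ^ 2 \<le> 4 ^ prot_cost p0 * m ^ (2 * F)"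
        using PAlice.IH(1)[OF v0 inv0 gd0, folded F_def] by blast
      show ?thesis using t key[OF _ t(2)] zero unfolding X0_def F_def by auto
    qed
  qed
  show ?case by (rule restore[OF m4 dc PAlice.prems(2,3)])
next
  case (PBob S p0 p1)
  have v0: "prot_valid m N p0" and v1: "prot_valid m N p1" and Sb: "S \<subseteq> {..<N} \<times> {..<m}"
    using PBob.prems(1) by auto
  have fS: "finite S" using Sb finite_subset by blast
  have dc: "\<exists>t. Res ok N Q \<rho> t \<and> m ^ dt_height t * card X ^ 2 \<le> 4 ^ prot_cost (PBob S p0 p1) * m ^ (2 * card ({..<N} - Q))"
    if inv: "Inv m N X Q a cs" and dn: "dense m N X Q" and gd: "Good ok m N (PBob S p0 p1) X Q a \<rho> cs" for X Q a \<rho> cs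
  proof -
    define F where "F = card ({..<N} - Q)"
    have finX: "finite X" using Inv_fin[OF inv] .
    have "X \<noteq> {}" using inv unfolding Inv_def by blast
    then have cX: "card X > 0" using finX by (simp add: card_gt_0_iff)
    have rf: "\<forall>e\<in>set cs. finite (fst e)" using Inv_rowfin[OF inv] .
    obtain S' sh where rd: "red S cs = (S', sh)" by (cases "red S cs")
    have S'b: "S' \<subseteq> {..<N} \<times> {..<m}" using red_sub[OF Sb, of cs] inv rd unfolding Inv_def by auto
    have S'd: "S' \<inter> pivs cs = {}" using red_disj[of cs S] inv rd unfolding Inv_def by auto
    have par: "\<And>Y. sat cs Y \<Longrightarrow> pf S Y = (pf S' Y \<noteq> sh)" using red_par[OF fS rf] rd by force
    have key: "m ^ h * card X ^ 2 \<le> 4 ^ prot_cost (PBob S p0 p1) * m ^ (2 * F)"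
      if "card X \<le> 2 * card X'" "m ^ h * card X' ^ 2 \<le> 4 ^ c' * m ^ (2 * F)" "c' \<le> max (prot_cost p0) (prot_cost p1)"
      for h X' c'
    proof -
      have "m ^ h * card X ^ 2 \<le> m ^ h * (2 * card X') ^ 2" using that(1) by (intro mult_left_mono power_mono) auto
      also have "\<dots> = 4 * (m ^ h * card X' ^ 2)" by (simp add: power_mult_distrib)
      also have "\<dots> \<le> 4 * (4 ^ c' * m ^ (2 * F))" using that(2) by simp
      also have "\<dots> \<le> 4 * (4 ^ max (prot_cost p0) (prot_cost p1) * m ^ (2 * F))"
        using that(3) by (intro mult_left_mono mult_right_mono power_increasing) auto
      also have "\<dots> = 4 ^ prot_cost (PBob S p0 p1) * m ^ (2 * F)" by simp
      finally show ?thesis .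
    qed
    show ?thesis
    proof (cases "\<exists>i c. (i,c) \<in> S' \<and> \<not> (i \<in> Q \<and> c = a i)")
      case True
      then obtain i c where ic: "(i,c) \<in> S'" "\<not> (i \<in> Q \<and> c = a i)" by blast
      have iN: "i < N" using ic S'b by auto
      define X' where "X' = {x\<in>X. x!i \<noteq> c}"
      have big: "card X \<le> 2 * card X'"
      proof (cases "i \<in> Q")
        case True
        then have "X' = X" using ic inv unfolding X'_def Inv_def by auto
        then show ?thesis by simp
      next
        case False
        define k where "k = card {x\<in>X. x!i = c}"
        have "k ^ 2 * m < card X ^ 2" using dn iN False unfolding dense_def k_def by blast
        moreover have "(2 * k) ^ 2 \<le> k ^ 2 * m" using m4 by (simp add: power_mult_distrib)
        ultimately have "(2 * k) ^ 2 < card X ^ 2" by linarith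
        then have "2 * k < card X" by (rule power_less_imp_less_base) simp
        moreover have "card X' = card X - k"
        proof -
          have "X' = X - {x\<in>X. x!i = c}" unfolding X'_def by auto
          then show ?thesis unfolding k_def using finX by (simp add: card_Diff_subset)
        qed
        ultimately show ?thesis by linarith
      qed
      have "card X' > 0" using big cX by linarith
      then have X'ne: "X' \<noteq> {}" by auto
      define cs' where "cs' = (S', sh, (i,c)) # cs"
      have inv': "Inv m N X' Q a cs'"
        using inv X'ne ic(1) S'd S'b unfolding Inv_def cs'_def X'_def by auto
      have gd': "Good ok m N p0 X' Q a \<rho> cs'"
        unfolding Good_def
      proof (intro ballI)
        fix x y assume x: "x \<in> X'" and y: "y \<in> Yset m N Q a \<rho> cs'"
        have y0: "y \<in> Yset m N Q a \<rho> cs" and ps: "pf S' (toF y) = sh" and sc: "sat cs (toF y)"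
          using y unfolding Yset_def cs'_def by auto
        have "parity S y = False" using par[OF sc] ps parity_pf by simp
        moreover have "x \<in> X" using x unfolding X'_def by simp
        ultimately show "ok (IND_N N x y) (prot_eval p0 x y)" using gd y0 unfolding Good_def by force
      qed
      obtain t where t: "Res ok N Q \<rho> t" "m ^ dt_height t * card X' ^ 2 \<le> 4 ^ prot_cost p0 * m ^ (2 * F)"
        using PBob.IH(1)[OF v0 inv' gd', folded F_def] by blast
      show ?thesis using t key[OF big t(2)] unfolding F_def by auto
    next
      case False
      define \<kappa> where "\<kappa> = pf S' (\<lambda>(i,j). \<rho> i)"
      define bb where "bb = (\<kappa> \<noteq> sh)"
      have pb: "parity S y = bb" if y: "y \<in> Yset m N Q a \<rho> cs" for y
      proof -
        have sc: "sat cs (toF y)" and yq: "\<forall>i\<in>Q. y!i!(a i) = \<rho> i" using y unfolding Yset_def by auto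
        have "pf S' (toF y) = \<kappa>" unfolding \<kappa>_def
        proof (rule pf_cong)
          fix v assume v: "v \<in> S'"
          obtain i j where vij: "v = (i,j)" by (cases v)
          then have "i \<in> Q" "j = a i" using False v by auto
          then show "toF y v = (\<lambda>(i,j). \<rho> i) v" using yq vij unfolding toF_def by auto
        qed
        then show ?thesis using par[OF sc] parity_pf unfolding bb_def by simp
      qed
      show ?thesis
      proof (cases bb)
        case True
        have gd1: "Good ok m N p1 X Q a \<rho> cs" using gd pb True unfolding Good_def by force
        obtain t where t: "Res ok N Q \<rho> t" "m ^ dt_height t * card X ^ 2 \<le> 4 ^ prot_cost p1 * m ^ (2 * F)"
          using PBob.IH(2)[OF v1 inv gd1, folded F_def] by blast
        show ?thesis using t key[OF _ t(2)] unfolding F_def by auto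
      next
        case False
        have gd0: "Good ok m N p0 X Q a \<rho> cs" using gd pb False unfolding Good_def by force
        obtain t where t: "Res ok N Q \<rho> t" "m ^ dt_height t * card X ^ 2 \<le> 4 ^ prot_cost p0 * m ^ (2 * F)"
          using PBob.IH(1)[OF v0 inv gd0, folded F_def] by blast
        show ?thesis using t key[OF _ t(2)] unfolding F_def by auto
      qed
    qed
  qed
  show ?case by (rule restore[OF m4 dc PBob.prems(2,3)])
qed


lemma final:
  fixes ok :: "bool list \<Rightarrow> 'o \<Rightarrow> bool" and p :: "(nat list, 'o) prot"
  assumes m4: "4 \<le> m" and pv: "prot_valid m N p"
    and pc: "\<forall>x\<in>alice_inputs m N. \<forall>y\<in>bob_inputs m N. ok (IND_N N x y) (prot_eval p x y)"
  shows "\<exists>t. Res ok N {} (\<lambda>_. False) t \<and> m ^ dt_height t \<le> 4 ^ prot_cost p"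
proof -
  have ne: "replicate N 0 \<in> alice_inputs m N" using m4 unfolding alice_inputs_def by auto
  have inv: "Inv m N (alice_inputs m N) {} (\<lambda>_. 0) []" using ne unfolding Inv_def by auto
  have gd: "Good ok m N p (alice_inputs m N) {} (\<lambda>_. 0) (\<lambda>_. False) []"
    using pc unfolding Good_def Yset_def by auto
  obtain t where t: "Res ok N {} (\<lambda>_. False) t"
    "m ^ dt_height t * card (alice_inputs m N) ^ 2 \<le> 4 ^ prot_cost p * m ^ (2 * card ({..<N} - {}))"
    using main[OF m4 pv inv gd] by blast
  have "m ^ dt_height t * (m ^ N) ^ 2 \<le> 4 ^ prot_cost p * (m ^ N) ^ 2"
    using t(2) unfolding alice_card by (simp add: power_mult[symmetric] mult.commute)
  moreover have "(m ^ N) ^ 2 > 0" using m4 by simp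
  ultimately have "m ^ dt_height t \<le> 4 ^ prot_cost p"
    using mult_le_cancel2[of "m ^ dt_height t" "(m ^ N) ^ 2" "4 ^ prot_cost p"] by blast
  then show ?thesis using t(1) by blast
qed

fun bob_tree :: "(nat \<times> nat) list \<Rightarrow> (bool list \<Rightarrow> 'o) \<Rightarrow> ('a, 'o) prot" where
  "bob_tree [] out = POut (out [])"
| "bob_tree (v # vs) out = PBob {v} (bob_tree vs (\<lambda>bs. out (False # bs))) (bob_tree vs (\<lambda>bs. out (True # bs)))"

lemma parity_single: "parity {(i,j)} y = y!i!j"
proof -
  have "{(a,b). (a,b) \<in> {(i,j)} \<and> y!a!b} = (if y!i!j then {(i,j)} else {})" by auto
  then show ?thesis unfolding parity_def by simp
qed

lemma bob_tree_eval: "prot_eval (bob_tree vs out) x y = out (map (\<lambda>(i,j). y!i!j) vs)"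
proof (induction vs arbitrary: out)
  case Nil then show ?case by simp
next
  case (Cons v vs)
  obtain i j where v: "v = (i,j)" by (cases v)
  show ?case using Cons v parity_single by simp
qed

lemma bob_tree_valid: "set vs \<subseteq> {..<N} \<times> {..<m} \<Longrightarrow> prot_valid m N (bob_tree vs out)"
  by (induction vs arbitrary: out) auto

fun alice_tree :: "'a list \<Rightarrow> ('a \<Rightarrow> ('a, 'o) prot) \<Rightarrow> ('a, 'o) prot \<Rightarrow> ('a, 'o) prot" where
  "alice_tree [] P d = d"
| "alice_tree (x1 # xs) P d = PAlice (\<lambda>x. x = x1) (alice_tree xs P d) (P x1)"

lemma alice_tree_eval: "x \<in> set xs \<Longrightarrow> prot_eval (alice_tree xs P d) x y = prot_eval (P x) x y"
  by (induction xs) auto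

lemma alice_tree_valid: "(\<forall>x\<in>set xs. prot_valid m N (P x)) \<Longrightarrow> prot_valid m N d \<Longrightarrow> prot_valid m N (alice_tree xs P d)"
  by (induction xs) auto

lemma exists_prot:
  fixes ok :: "bool list \<Rightarrow> 'o \<Rightarrow> bool"
  assumes ex: "\<forall>z. \<exists>o'. ok z o'"
  shows "\<exists>p :: (nat list, 'o) prot. prot_valid m N p \<and>
     (\<forall>x\<in>alice_inputs m N. \<forall>y\<in>bob_inputs m N. ok (IND_N N x y) (prot_eval p x y))"
proof -
  define out where "out = (\<lambda>z. SOME o'. ok z o')"
  have okout: "ok z (out z)" for z unfolding out_def using ex by (metis someI_ex)
  obtain xs where xs: "set xs = alice_inputs m N" using finite_list[OF alice_fin] by blast
  define P where "P = (\<lambda>x1. bob_tree (map (\<lambda>i. (i, x1!i)) [0..<N]) out :: (nat list, 'o) prot)"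
  define p where "p = alice_tree xs P (POut (out []))"
  have "prot_valid m N p" unfolding p_def
  proof (rule alice_tree_valid)
    show "\<forall>x\<in>set xs. prot_valid m N (P x)"
    proof
      fix x assume "x \<in> set xs"
      then have "\<forall>i<N. x!i < m" using xs unfolding alice_inputs_def by auto
      then show "prot_valid m N (P x)" unfolding P_def by (intro bob_tree_valid) auto
    qed
  qed simp
  moreover have "ok (IND_N N x y) (prot_eval p x y)" if "x \<in> alice_inputs m N" for x y
  proof -
    have "prot_eval p x y = prot_eval (P x) x y"
      unfolding p_def using that xs by (simp add: alice_tree_eval)
    also have "\<dots> = out (map (\<lambda>(i,j). y!i!j) (map (\<lambda>i. (i, x!i)) [0..<N]))"
      unfolding P_def by (rule bob_tree_eval)
    also have "\<dots> = out (IND_N N x y)" unfolding IND_N_def IND_def by (simp add: comp_def)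
    finally show ?thesis using okout by simp
  qed
  ultimately show ?thesis by blast
qed

lemma lower:
  fixes ok :: "bool list \<Rightarrow> 'o \<Rightarrow> bool"
  assumes m4: "4 \<le> m" and ex: "\<forall>z. \<exists>o'. ok z o'"
  and C: "C = (LEAST c. \<exists>p :: (nat list, 'o) prot. prot_valid m N p \<and> prot_cost p = c \<and>
     (\<forall>x\<in>alice_inputs m N. \<forall>y\<in>bob_inputs m N. ok (IND_N N x y) (prot_eval p x y)))"
  shows "\<exists>t. Res ok N {} (\<lambda>_. False) t \<and> m ^ dt_height t \<le> 4 ^ C"
proof -
  let ?P = "\<lambda>c. \<exists>p :: (nat list, 'o) prot. prot_valid m N p \<and> prot_cost p = c \<and>
     (\<forall>x\<in>alice_inputs m N. \<forall>y\<in>bob_inputs m N. ok (IND_N N x y) (prot_eval p x y))"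
  obtain p0 :: "(nat list, 'o) prot" where "prot_valid m N p0"
    "\<forall>x\<in>alice_inputs m N. \<forall>y\<in>bob_inputs m N. ok (IND_N N x y) (prot_eval p0 x y)"
    using exists_prot[OF ex] by blast
  then have "?P (prot_cost p0)" by blast
  then have "?P C" unfolding C by (rule LeastI)
  then obtain p :: "(nat list, 'o) prot" where p: "prot_valid m N p" "prot_cost p = C"
    "\<forall>x\<in>alice_inputs m N. \<forall>y\<in>bob_inputs m N. ok (IND_N N x y) (prot_eval p x y)" by blast
  show ?thesis using final[OF m4 p(1) p(3)] p(2) by simp
qed

lemma real_bound:
  assumes m4: "4 \<le> m" and hd: "D \<le> h" and mh: "m ^ h \<le> (4::nat) ^ C"
  shows "1/2 * real D * log 2 (real m) \<le> real C"
proof -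
  have "real m ^ h \<le> 4 ^ C" using mh by (metis of_nat_le_iff of_nat_numeral of_nat_power)
  then have "log 2 (real m ^ h) \<le> log 2 (4 ^ C)" using m4 by (intro log_mono) auto
  moreover have "log 2 (real m ^ h) = real h * log 2 (real m)" using m4 by (simp add: log_nat_power)
  moreover have "log 2 ((4::real) ^ C) = real C * 2"
  proof -
    have "log 2 ((4::real) ^ C) = real C * log 2 4" by (simp add: log_nat_power)
    moreover have "log 2 (4::real) = 2"
      using log_pow_cancel[of "2::real" 2] by simp
    ultimately show ?thesis by simp
  qed
  ultimately have "real h * log 2 (real m) \<le> real C * 2" by simp
  moreover have "real D * log 2 (real m) \<le> real h * log 2 (real m)"
    using hd m4 by (intro mult_right_mono) auto
  ultimately show ?thesis by simp
qed

theorem theorem15: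
  fixes m N :: nat and f :: "bool list \<Rightarrow> bool" and R :: "(bool list \<times> 'w) set"
  assumes "m \<ge> 4"
  shows "real (C_xor_lift_fun m N f) \<ge> 1/2 * real (C_dt_fun N f) * log 2 (real m) \<and>
         real (C_xor_lift_rel m N R) \<ge> 1/2 * real (C_dt_rel N R) * log 2 (real m)"
proof
  obtain t where t: "Res (\<lambda>z o'. o' = f z) N {} (\<lambda>_. False) t" "m ^ dt_height t \<le> 4 ^ C_xor_lift_fun m N f"
    using lower[OF assms, of "\<lambda>z o'. o' = f z" "C_xor_lift_fun m N f"] unfolding C_xor_lift_fun_def by auto
  have "dt_computes_fun N f t" using t(1) unfolding Res_def dt_computes_fun_def bool_inputs_def by auto
  then have "C_dt_fun N f \<le> dt_height t" unfolding C_dt_fun_def by (intro Least_le) blast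
  then show "real (C_xor_lift_fun m N f) \<ge> 1/2 * real (C_dt_fun N f) * log 2 (real m)"
    using real_bound[OF assms _ t(2)] by blast
next
  have ex: "\<forall>z. \<exists>o'. solves_rel R z o'"
    unfolding solves_rel_def by (metis (full_types))
  obtain t where t: "Res (solves_rel R) N {} (\<lambda>_. False) t" "m ^ dt_height t \<le> 4 ^ C_xor_lift_rel m N R"
    using lower[OF assms ex, of "C_xor_lift_rel m N R"] unfolding C_xor_lift_rel_def by auto
  have "dt_computes_rel N R t" using t(1) unfolding Res_def dt_computes_rel_def bool_inputs_def by auto
  then have "C_dt_rel N R \<le> dt_height t" unfolding C_dt_rel_def by (intro Least_le) blast
  then show "real (C_xor_lift_rel m N R) \<ge> 1/2 * real (C_dt_rel N R) * log 2 (real m)"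
    using real_bound[OF assms _ t(2)] by blast
qed

end
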